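(* Let $N\ge 2$, $x_0<x_1<\dots<x_N$, $h_i=x_i-x_{i-1}$, and let $f_1,\dots,f_N\in\mathbb{R}$ be a histogram. Let $I=[x_0,x_N]$, $I_i=[x_{i-1},x_i)$ for $i<N$, $I_N=[x_{N-1},x_N]$, and for $i=1,\dots,N$ let $L_i(x)=a_ix+b_i$ with $a_i=\frac{x_i-x_{i-1}}{x_N-x_0}$, $b_i=\frac{x_Nx_{i-1}-x_0x_i}{x_N-x_0}$, let $\alpha_i$ be arbitrary with $|\alpha_i|<1$, and let $q_i:I\to\mathbb{R}$ be Lipschitz continuous. Let $f$ be the unique bounded function on $I$ with $f(x)=\alpha_if(L_i^{-1}(x))+q_i(L_i^{-1}(x))$ for $x\in I_i$, $i=1,\dots,N$ (the fractal function of the IFS with maps $L_i(x)$, $F_i(x,y)=\alpha_iy+q_i(x)$). Then $\int_{x_{i-1}}^{x_i}f(x)\,dx=h_if_i$ for all $i=1,\dots,N$ if and only if $$\int_Iq_i(x)\,dx=\frac{h_if_i-\alpha_ia_i\sum_{j=1}^Nh_jf_j}{a_i},\qquad i=1,\dots,N.$$ *)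

theory Defs
  imports "HOL-Analysis.Analysis"
begin

text \<open>Nodes x 0 < ... < x N; affine maps L_i(t) = a_i t + b_i mapping [x_0,x_N] onto [x_(i-1),x_i].\<close>

definition ifs_a :: "(nat \<Rightarrow> real) \<Rightarrow> nat \<Rightarrow> nat \<Rightarrow> real" where
  "ifs_a x N i = (x i - x (i - 1)) / (x N - x 0)"

definition ifs_b :: "(nat \<Rightarrow> real) \<Rightarrow> nat \<Rightarrow> nat \<Rightarrow> real" where
  "ifs_b x N i = (x N * x (i - 1) - x 0 * x i) / (x N - x 0)"

definition ifs_L :: "(nat \<Rightarrow> real) \<Rightarrow> nat \<Rightarrow> nat \<Rightarrow> real \<Rightarrow> real" where
  "ifs_L x N i t = ifs_a x N i * t + ifs_b x N i"

definition ifs_Linv :: "(nat \<Rightarrow> real) \<Rightarrow> nat \<Rightarrow> nat \<Rightarrow> real \<Rightarrow> real" where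
  "ifs_Linv x N i t = (t - ifs_b x N i) / ifs_a x N i"

definition ifs_I :: "(nat \<Rightarrow> real) \<Rightarrow> nat \<Rightarrow> nat \<Rightarrow> real set" where
  "ifs_I x N i = (if i < N then {x (i - 1)..<x i} else {x (i - 1)..x i})"

end

theory Submission
  imports Defs
begin

lemma xmono:
  fixes k N :: nat
  assumes incr: "\<And>i. 1 \<le> i \<Longrightarrow> i \<le> N \<Longrightarrow> x (i - 1) < (x i::real)"
  shows "j < k \<Longrightarrow> k \<le> N \<Longrightarrow> x j < x k"
proof (induction k)
  case 0 then show ?case by simp
next
  case (Suc k)
  have "x k < x (Suc k)" using incr[of "Suc k"] Suc.prems by simp
  show ?case
  proof (cases "j < k")
    case True then show ?thesis using Suc \<open>x k < x (Suc k)\<close> by auto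
  next
    case False then have "j = k" using Suc.prems by auto
    then show ?thesis using \<open>x k < x (Suc k)\<close> by simp
  qed
qed

lemma xmono_le:
  fixes N :: nat
  assumes incr: "\<And>i. 1 \<le> i \<Longrightarrow> i \<le> N \<Longrightarrow> x (i - 1) < (x i::real)"
  shows "j \<le> k \<Longrightarrow> k \<le> N \<Longrightarrow> x j \<le> x k"
  using xmono[of N x, OF incr, of j k] by (cases "j = k") auto

lemma cover_aux:
  fixes n N :: nat
  assumes incr: "\<And>i. 1 \<le> i \<Longrightarrow> i \<le> N \<Longrightarrow> x (i - 1) < (x i::real)"
  shows "n \<le> N \<Longrightarrow> x 0 \<le> t \<Longrightarrow> t < x n \<Longrightarrow> \<exists>i\<in>{1..n}. x (i - 1) \<le> t \<and> t < x i"
proof (induction n)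
  case 0 then show ?case by simp
next
  case (Suc n)
  show ?case
  proof (cases "t < x n")
    case True then show ?thesis using Suc by force
  next
    case False then show ?thesis using Suc.prems by (intro bexI[of _ "Suc n"]) auto
  qed
qed

lemma cover:
  fixes N :: nat
  assumes incr: "\<And>i. 1 \<le> i \<Longrightarrow> i \<le> N \<Longrightarrow> x (i - 1) < (x i::real)"
    and "N \<ge> 1" "x 0 \<le> t" "t \<le> x N"
  shows "\<exists>i\<in>{1..N}. t \<in> ifs_I x N i"
proof (cases "t < x N")
  case True
  then obtain i where "i \<in> {1..N}" "x (i - 1) \<le> t" "t < x i"
    using cover_aux[of N x, OF incr, of N t] assms by auto
  then show ?thesis unfolding ifs_I_def by (intro bexI[of _ i]) auto
next
  case False
  then show ?thesis using assms unfolding ifs_I_def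
    by (intro bexI[of _ N]) (auto intro: order.strict_implies_order)
qed

lemma disj:
  fixes N :: nat
  assumes incr: "\<And>i. 1 \<le> i \<Longrightarrow> i \<le> N \<Longrightarrow> x (i - 1) < (x i::real)"
    and "i \<in> {1..N}" "j \<in> {1..N}" "i < j" "t \<in> ifs_I x N i" "t \<in> ifs_I x N j"
  shows False
proof -
  have "t < x i" using assms unfolding ifs_I_def by auto
  moreover have "x (j - 1) \<le> t" using assms unfolding ifs_I_def by (auto split: if_splits)
  moreover have "x i \<le> x (j - 1)" using xmono_le[of N x, OF incr, of i "j - 1"] assms by auto
  ultimately show False by simp
qed

lemma ifs_I_sub: "ifs_I x N i \<subseteq> {x (i - 1)..x i}"
  unfolding ifs_I_def by auto


lemma ifs_e1: "x 0 < (x N::real) \<Longrightarrow> ifs_a x N i * x 0 + ifs_b x N i = x (i - 1)"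
  unfolding ifs_a_def ifs_b_def
  apply (simp add: add_divide_distrib[symmetric] nonzero_eq_divide_eq)
  apply (simp add: algebra_simps)
  by (simp add: left_diff_distrib[symmetric])

lemma ifs_e2: "x 0 < (x N::real) \<Longrightarrow> ifs_a x N i * x N + ifs_b x N i = x i"
  unfolding ifs_a_def ifs_b_def
  apply (simp add: add_divide_distrib[symmetric] nonzero_eq_divide_eq)
  apply (simp add: algebra_simps)
  by (simp add: left_diff_distrib[symmetric])

lemma change_var:
  fixes N :: nat and x :: "nat \<Rightarrow> real" and g :: "real \<Rightarrow> real"
  assumes x0N: "x 0 < x N" and i: "x (i - 1) < x i"
    and g: "(g has_integral J) {x 0..x N}"
  shows "((\<lambda>t. g (ifs_Linv x N i t)) has_integral (ifs_a x N i * J)) {x (i - 1)..x i}"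
proof -
  define a where "a = ifs_a x N i"
  define b where "b = ifs_b x N i"
  have apos: "a > 0" unfolding a_def ifs_a_def using x0N i by simp
  have e1: "a * x 0 + b = x (i - 1)" unfolding a_def b_def using ifs_e1[OF x0N] .
  have e2: "a * x N + b = x i" unfolding a_def b_def using ifs_e2[OF x0N] .
  have g': "(g has_integral J) (cbox (x 0) (x N))" using g by simp
  from has_integral_affinity[OF g', of "1 / a" "- b / a"] apos
  have h: "((\<lambda>t. g ((1 / a) *\<^sub>R t + - b / a)) has_integral (1 / \<bar>1 / a\<bar> ^ DIM(real)) *\<^sub>R J)
     ((\<lambda>t. (1 / (1 / a)) *\<^sub>R t + - ((1 / (1 / a)) *\<^sub>R (- b / a))) ` cbox (x 0) (x N))"
    by simp
  have fe: "(\<lambda>t. g ((1 / a) *\<^sub>R t + - b / a)) = (\<lambda>t. g (ifs_Linv x N i t))"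
    unfolding ifs_Linv_def a_def[symmetric] b_def[symmetric] by (rule ext) (simp add: diff_divide_distrib)
  have im: "((\<lambda>t. (1 / (1 / a)) *\<^sub>R t + - ((1 / (1 / a)) *\<^sub>R (- b / a))) ` cbox (x 0) (x N))
     = {x (i - 1)..x i}"
  proof -
    have "(\<lambda>t. (1 / (1 / a)) *\<^sub>R t + - ((1 / (1 / a)) *\<^sub>R (- b / a))) = (\<lambda>t. a * t + b)"
      using apos by (intro ext) simp
    then show ?thesis using apos x0N e1 e2 by (simp add: image_affinity_atLeastAtMost)
  qed
  have co: "(1 / \<bar>1 / a\<bar> ^ DIM(real)) *\<^sub>R J = a * J" using apos by simp
  have "((\<lambda>t. g (ifs_Linv x N i t)) has_integral (a * J)) {x (i - 1)..x i}"
    using h unfolding fe im co .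
  then show ?thesis unfolding a_def .
qed

theorem mainTheorem8:
  fixes N :: nat and x :: "nat \<Rightarrow> real" and fh :: "nat \<Rightarrow> real"
    and \<alpha> :: "nat \<Rightarrow> real" and q :: "nat \<Rightarrow> real \<Rightarrow> real" and f :: "real \<Rightarrow> real"
  assumes N: "N \<ge> 2"
    and incr: "\<And>i. 1 \<le> i \<Longrightarrow> i \<le> N \<Longrightarrow> x (i - 1) < x i"
    and alpha: "\<And>i. 1 \<le> i \<Longrightarrow> i \<le> N \<Longrightarrow> \<bar>\<alpha> i\<bar> < 1"
    and lip: "\<And>i. 1 \<le> i \<Longrightarrow> i \<le> N \<Longrightarrow> \<exists>C. C-lipschitz_on {x 0..x N} (q i)"
    and bdd: "bounded (f ` {x 0..x N})"
    and feq: "\<And>i t. 1 \<le> i \<Longrightarrow> i \<le> N \<Longrightarrow> t \<in> ifs_I x N i \<Longrightarrow>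
                f t = \<alpha> i * f (ifs_Linv x N i t) + q i (ifs_Linv x N i t)"
  shows "(\<forall>i\<in>{1..N}. integral {x (i - 1)..x i} f = (x i - x (i - 1)) * fh i)
     \<longleftrightarrow> (\<forall>i\<in>{1..N}. integral {x 0..x N} (q i) =
           ((x i - x (i - 1)) * fh i
             - \<alpha> i * ifs_a x N i * (\<Sum>j=1..N. (x j - x (j - 1)) * fh j)) / ifs_a x N i)"
proof -
  have x0N: "x 0 < x N" using xmono[of N x, OF incr, of 0 N] N by auto
  define Li where "Li = ifs_Linv x N"
  have Lrange: "Li i t \<in> {x 0..x N}" if "i \<in> {1..N}" "t \<in> {x (i - 1)..x i}" for i t
  proof -
    have apos: "ifs_a x N i > 0" unfolding ifs_a_def using x0N incr[of i] that by simp
    have e1: "ifs_a x N i * x 0 + ifs_b x N i = x (i - 1)" using ifs_e1[OF x0N] .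
    have e2: "ifs_a x N i * x N + ifs_b x N i = x i" using ifs_e2[OF x0N] .
    show ?thesis unfolding Li_def ifs_Linv_def using apos e1 e2 that
      by (auto simp: field_simps)
  qed
  have qcont: "continuous_on {x 0..x N} (q i)" if "i \<in> {1..N}" for i
    using lip[of i] that lipschitz_on_continuous_on by auto
  have qint: "q i integrable_on {x 0..x N}" if "i \<in> {1..N}" for i
    using qcont[OF that] integrable_continuous_interval by blast
  define T where "T = (\<lambda>g t. \<Sum>i=1..N. if t \<in> ifs_I x N i then \<alpha> i * g (Li i t) + q i (Li i t) else 0)"
  have T_at: "T g t = \<alpha> i * g (Li i t) + q i (Li i t)" if "i \<in> {1..N}" "t \<in> ifs_I x N i" for g t i
  proof -
    have "T g t = (\<Sum>j=1..N. if j = i then \<alpha> i * g (Li i t) + q i (Li i t) else 0)"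
      unfolding T_def
    proof (rule sum.cong)
      fix j assume j: "j \<in> {1..N}"
      show "(if t \<in> ifs_I x N j then \<alpha> j * g (Li j t) + q j (Li j t) else 0) =
            (if j = i then \<alpha> i * g (Li i t) + q i (Li i t) else 0)"
      proof (cases "j = i")
        case False
        then have "t \<notin> ifs_I x N j"
          using disj[of N x i j t] disj[of N x j i t] incr that j by (metis linorder_neqE_nat)
        then show ?thesis using False by simp
      qed (use that in simp)
    qed simp
    also have "\<dots> = \<alpha> i * g (Li i t) + q i (Li i t)" using that by simp
    finally show ?thesis .
  qed
  have T_int: "T g integrable_on {x 0..x N}" if g: "g integrable_on {x 0..x N}" for g
    unfolding T_def
  proof (rule Henstock_Kurzweil_Integration.integrable_sum)
    fix i assume i: "i \<in> {1..N}"
    have xi: "x (i - 1) < x i" using incr i by auto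
    let ?h = "\<lambda>t. \<alpha> i * g (Li i t) + q i (Li i t)"
    have hint: "?h integrable_on {x (i - 1)..x i}"
    proof -
      have "(\<lambda>t. g (Li i t)) integrable_on {x (i - 1)..x i}"
        unfolding Li_def integrable_on_def by (rule exI, rule change_var[OF x0N xi integrable_integral[OF g]])
      moreover have "(\<lambda>t. q i (Li i t)) integrable_on {x (i - 1)..x i}"
        unfolding Li_def integrable_on_def by (rule exI, rule change_var[OF x0N xi integrable_integral[OF qint[OF i]]])
      ultimately show ?thesis
        by (intro integrable_add integrable_on_mult_right)
    qed
    let ?k = "\<lambda>t. if t \<in> {x (i - 1)..x i} then ?h t else 0"
    have "?k integrable_on {x (i - 1)..x i}"
      by (rule integrable_spike[OF hint, of "{}"]) auto
    then have kint: "?k integrable_on {x 0..x N}"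
      by (rule integrable_on_superset)
        (use xmono_le[of N x, OF incr, of 0 "i - 1"] xmono_le[of N x, OF incr, of i N] i in auto)
    show "(\<lambda>t. if t \<in> ifs_I x N i then ?h t else 0) integrable_on {x 0..x N}"
      by (rule integrable_spike[OF kint, of "{x i}"]) (auto simp: ifs_I_def)
  qed simp
  define gs where "gs n = (T ^^ n) (\<lambda>_. 0)" for n
  have gs_int: "gs n integrable_on {x 0..x N}" for n
    by (induction n) (auto simp: gs_def intro: T_int)
  define c where "c = Max ((\<lambda>i. \<bar>\<alpha> i\<bar>) ` {1..N})"
  have c1: "c < 1" unfolding c_def using alpha N by (subst Max_less_iff) auto
  have ca: "\<bar>\<alpha> i\<bar> \<le> c" if "i \<in> {1..N}" for i unfolding c_def using that by auto
  have c0: "0 \<le> c" using ca[of 1] N by auto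
  obtain Bf where Bf: "\<And>t. t \<in> {x 0..x N} \<Longrightarrow> \<bar>f t\<bar> \<le> Bf"
    using bdd unfolding bounded_iff by (metis image_eqI real_norm_def)
  have Bf0: "0 \<le> Bf" using Bf[of "x 0"] x0N by force
  have err: "\<bar>f t - gs n t\<bar> \<le> c ^ n * Bf" if "t \<in> {x 0..x N}" for n t
    using that
  proof (induction n arbitrary: t)
    case 0 then show ?case using Bf by (simp add: gs_def)
  next
    case (Suc n)
    obtain i where i: "i \<in> {1..N}" "t \<in> ifs_I x N i"
      using cover[of N x t, OF incr] N Suc.prems by auto
    have Lr: "Li i t \<in> {x 0..x N}" using Lrange[OF i(1)] ifs_I_sub i(2) by blast
    have "gs (Suc n) t = T (gs n) t" by (simp add: gs_def)
    also have "\<dots> = \<alpha> i * gs n (Li i t) + q i (Li i t)" using T_at[OF i] .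
    finally have g1: "gs (Suc n) t = \<alpha> i * gs n (Li i t) + q i (Li i t)" .
    have f1: "f t = \<alpha> i * f (Li i t) + q i (Li i t)" using feq[of i t] i unfolding Li_def by auto
    have "\<bar>f t - gs (Suc n) t\<bar> = \<bar>\<alpha> i\<bar> * \<bar>f (Li i t) - gs n (Li i t)\<bar>"
      unfolding f1 g1 by (simp add: abs_mult[symmetric] algebra_simps)
    also have "\<dots> \<le> c * (c ^ n * Bf)"
      by (rule mult_mono[OF ca[OF i(1)] Suc.IH[OF Lr] c0]) simp
    finally show ?case by simp
  qed
  have fint: "f integrable_on {x 0..x N}"
  proof -
    have "f integrable_on cbox (x 0) (x N)"
    proof (rule integrable_uniform_limit)
      fix e :: real assume e: "e > 0"
      obtain n where n: "c ^ n < e / (Bf + 1)" using real_arch_pow_inv[of "e / (Bf + 1)" c] e Bf0 c1 by auto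
      have "c ^ n * Bf \<le> c ^ n * (Bf + 1)" using c0 by (intro mult_left_mono) auto
      also have "\<dots> \<le> e" using n Bf0 by (simp add: field_simps)
      finally have ne: "c ^ n * Bf \<le> e" .
      show "\<exists>g. (\<forall>t\<in>cbox (x 0) (x N). norm (f t - g t) \<le> e) \<and> g integrable_on cbox (x 0) (x N)"
        using err ne gs_int by (intro exI[of _ "gs n"]) (fastforce intro: order_trans)
    qed
    then show ?thesis by simp
  qed
  define F where "F = integral {x 0..x N} f"
  define Q where "Q i = integral {x 0..x N} (q i)" for i
  define a where "a = ifs_a x N"
  have apos: "a i > 0" if "i \<in> {1..N}" for i unfolding a_def ifs_a_def using x0N incr[of i] that by simp
  have key: "integral {x (i - 1)..x i} f = \<alpha> i * a i * F + a i * Q i" if i: "i \<in> {1..N}" for i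
  proof -
    have xi: "x (i - 1) < x i" using incr i by auto
    have h1: "((\<lambda>t. f (Li i t)) has_integral (a i * F)) {x (i - 1)..x i}"
      unfolding Li_def a_def F_def by (rule change_var[OF x0N xi integrable_integral[OF fint]])
    have h2: "((\<lambda>t. q i (Li i t)) has_integral (a i * Q i)) {x (i - 1)..x i}"
      unfolding Li_def a_def Q_def by (rule change_var[OF x0N xi integrable_integral[OF qint[OF i]]])
    have h: "((\<lambda>t. \<alpha> i * f (Li i t) + q i (Li i t)) has_integral (\<alpha> i * (a i * F) + a i * Q i)) {x (i - 1)..x i}"
      by (intro has_integral_add has_integral_mult_right h1 h2)
    have "(f has_integral (\<alpha> i * (a i * F) + a i * Q i)) {x (i - 1)..x i}"
    proof (rule has_integral_spike[OF _ _ h, of "{x i}"])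
      fix t assume t: "t \<in> {x (i - 1)..x i} - {x i}"
      then have "t \<in> ifs_I x N i" unfolding ifs_I_def by auto
      then show "f t = \<alpha> i * f (Li i t) + q i (Li i t)" using feq[of i t] i unfolding Li_def by auto
    qed auto
    then show ?thesis by (simp add: integral_unique algebra_simps)
  qed
  have sumF: "integral {x 0..x n} f = (\<Sum>i=1..n. integral {x (i - 1)..x i} f)" if "n \<le> N" for n
    using that
  proof (induction n)
    case 0 then show ?case by simp
  next
    case (Suc n)
    have le1: "x 0 \<le> x n" and le2: "x n \<le> x (Suc n)" and le3: "x (Suc n) \<le> x N"
      using xmono_le[of N x, OF incr] Suc.prems by auto
    have "integral {x 0..x n} f + integral {x n..x (Suc n)} f = integral {x 0..x (Suc n)} f"
      by (rule Henstock_Kurzweil_Integration.integral_combine[OF le1 le2 integrable_subinterval_real[OF fint]]) (use le1 le3 in auto)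
    then show ?case using Suc by simp
  qed
  have sumA: "(\<Sum>i=1..n. a i) = (x n - x 0) / (x N - x 0)" for n
    using x0N by (induction n) (auto simp: a_def ifs_a_def field_simps)
  have sa1: "(\<Sum>i=1..N. a i) = 1" using sumA[of N] x0N by simp
  have sal: "(\<Sum>i=1..N. \<alpha> i * a i) < 1"
  proof -
    have "(\<Sum>i=1..N. \<alpha> i * a i) < (\<Sum>i=1..N. a i)"
    proof (rule sum_strict_mono)
      fix i assume i: "i \<in> {1..N}"
      have "\<alpha> i < 1" using alpha[of i] i by auto
      then show "\<alpha> i * a i < a i" using apos[OF i] by simp
    qed (use N in auto)
    then show ?thesis using sa1 by simp
  qed
  define S where "S = (\<Sum>j=1..N. (x j - x (j - 1)) * fh j)"
  have hI: "x i - x (i - 1) = a i * (x N - x 0)" for i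
    unfolding a_def ifs_a_def using x0N by simp
  have FS: "F = (\<Sum>i=1..N. integral {x (i - 1)..x i} f)" unfolding F_def using sumF[of N] by simp
  show ?thesis unfolding a_def[symmetric] Q_def[symmetric] S_def[symmetric]
  proof
    assume H: "\<forall>i\<in>{1..N}. integral {x (i - 1)..x i} f = (x i - x (i - 1)) * fh i"
    have FS': "F = S" unfolding FS S_def using H by simp
    show "\<forall>i\<in>{1..N}. Q i = ((x i - x (i - 1)) * fh i - \<alpha> i * a i * S) / a i"
    proof
      fix i assume i: "i \<in> {1..N}"
      have "(x i - x (i - 1)) * fh i = \<alpha> i * a i * S + a i * Q i" using H key[OF i] i FS' by simp
      then show "Q i = ((x i - x (i - 1)) * fh i - \<alpha> i * a i * S) / a i"
        using apos[OF i] by (simp add: field_simps)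
    qed
  next
    assume H: "\<forall>i\<in>{1..N}. Q i = ((x i - x (i - 1)) * fh i - \<alpha> i * a i * S) / a i"
    have K: "integral {x (i - 1)..x i} f = \<alpha> i * a i * (F - S) + (x i - x (i - 1)) * fh i"
      if i: "i \<in> {1..N}" for i
    proof -
      have "a i * Q i = (x i - x (i - 1)) * fh i - \<alpha> i * a i * S" using H i apos[OF i] by simp
      then show ?thesis using key[OF i] by (simp add: algebra_simps)
    qed
    have "F = (\<Sum>i=1..N. \<alpha> i * a i * (F - S) + (x i - x (i - 1)) * fh i)"
      using FS K by (metis (no_types, lifting) sum.cong)
    also have "\<dots> = (\<Sum>i=1..N. \<alpha> i * a i) * (F - S) + S"
      unfolding S_def by (simp add: sum.distrib sum_distrib_right)
    finally have "(F - S) * (1 - (\<Sum>i=1..N. \<alpha> i * a i)) = 0" by (simp add: algebra_simps)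
    then have FS': "F = S" using sal by simp
    show "\<forall>i\<in>{1..N}. integral {x (i - 1)..x i} f = (x i - x (i - 1)) * fh i"
      using K FS' by simp
  qed
qed

end
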